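(* Let $G$ be a finite group generated by a class $D$ of conjugate $3$-transpositions. Then every element of $D$ is $2$-radical in $G$; that is, for every $d\in D$ and all $a_1,a_2\in G$, the subgroup $\langle [a_1,d],[a_2,d]\rangle$ is solvable.
   Context: A class $D$ of conjugate involutions of a finite group $G$ which generates $G$ is a class of conjugate $3$-transpositions if any two non-commuting elements of $D$ generate a dihedral group of order $6$ (equivalently, the product of any two elements of $D$ has order $1$, $2$ or $3$). The commutator is $[x,y]=xyx^{-1}y^{-1}$. *)

theory Defs
  imports "HOL-Algebra.Algebra"
begin

definition commutator :: "('a, 'b) monoid_scheme \<Rightarrow> 'a \<Rightarrow> 'a \<Rightarrow> 'a" where
  "commutator G x y = x \<otimes>\<^bsub>G\<^esub> y \<otimes>\<^bsub>G\<^esub> inv\<^bsub>G\<^esub> x \<otimes>\<^bsub>G\<^esub> inv\<^bsub>G\<^esub> y"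

definition three_transp_class :: "('a, 'b) monoid_scheme \<Rightarrow> 'a set \<Rightarrow> bool" where
  "three_transp_class G D \<longleftrightarrow>
     (\<exists>d0 \<in> carrier G. D = {g \<otimes>\<^bsub>G\<^esub> d0 \<otimes>\<^bsub>G\<^esub> inv\<^bsub>G\<^esub> g | g. g \<in> carrier G}) \<and>
     (\<forall>d \<in> D. group.ord G d = 2) \<and>
     generate G D = carrier G \<and>
     (\<forall>x \<in> D. \<forall>y \<in> D. group.ord G (x \<otimes>\<^bsub>G\<^esub> y) \<in> {1, 2, 3})"

end

theory Submission
  imports Defs
begin

type_synonym rls = "(nat list \<times> nat list) list"

fun app1 :: "rls \<Rightarrow> nat list \<Rightarrow> nat \<times> nat \<Rightarrow> nat list" where
  "app1 R w (p, k) = (if k < length R \<and> take (length (fst (R!k))) (drop p w) = fst (R!k)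
      then take p w @ snd (R!k) @ drop (p + length (fst (R!k))) w else w)"

definition appl :: "rls \<Rightarrow> nat list \<Rightarrow> (nat \<times> nat) list \<Rightarrow> nat list" where
  "appl R w cs = foldl (app1 R) w cs"

definition piece :: "nat list list \<Rightarrow> nat \<times> bool \<Rightarrow> nat list" where
  "piece T jb = (if fst jb < length T then (if snd jb then rev (T ! fst jb) else T ! fst jb) else [])"

definition inW :: "rls \<Rightarrow> nat list list \<Rightarrow> (nat \<times> nat) list \<times> (nat \<times> bool) list \<Rightarrow> nat list \<Rightarrow> bool" where
  "inW R T c w \<longleftrightarrow> appl R w (fst c) = concat (map (piece T) (snd c))"

definition lvl_ok :: "rls \<Rightarrow> nat list list \<Rightarrow> nat list list \<Rightarrow> ((nat \<times> nat) list \<times> (nat \<times> bool) list) list \<Rightarrow> bool" where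
  "lvl_ok R S T C \<longleftrightarrow> (\<forall>u \<in> set [0,1,2]. \<forall>t \<in> set T. \<exists>c \<in> set C. inW R T c ([u] @ t @ [u]))
     \<and> (\<forall>s1 \<in> set S. \<forall>s2 \<in> set S. \<exists>c \<in> set C. inW R T c (s1 @ s2 @ rev s1 @ rev s2))
     \<and> (\<forall>s \<in> set S. \<forall>i \<in> set s. i < 3)"

definition prs :: "bool \<Rightarrow> nat \<Rightarrow> nat \<Rightarrow> rls" where
  "prs b i j = (if b then [([i,j,i],[j,i,j]),([j,i,j],[i,j,i])] else [([i,j],[j,i]),([j,i],[i,j])])"

definition rules :: "bool \<Rightarrow> bool \<Rightarrow> bool \<Rightarrow> rls" where
  "rules b01 b02 b12 = [([0,0],[]),([1,1],[]),([2,2],[]),([],[0,0]),([],[1,1]),([],[2,2])]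
     @ prs b01 0 1 @ prs b02 0 2 @ prs b12 1 2"

definition all_ok :: "rls \<Rightarrow> nat list list \<Rightarrow> ((nat \<times> nat) list \<times> (nat \<times> bool) list) list \<Rightarrow> bool" where
  "all_ok R T C \<longleftrightarrow> lvl_ok R [[0],[1],[2]] [[0,1],[0,2]] C \<and> lvl_ok R [[0,1],[0,2]] T C \<and> lvl_ok R T [] C"

context group begin

definition lt :: "'a list \<Rightarrow> nat \<Rightarrow> 'a" where
  "lt g i = (if i < length g then g!i else \<one>)"

definition wv :: "'a list \<Rightarrow> nat list \<Rightarrow> 'a" where
  "wv g w = foldr (\<lambda>i acc. lt g i \<otimes> acc) w \<one>"

lemma lt_carrier: "set g \<subseteq> carrier G \<Longrightarrow> lt g i \<in> carrier G"
  unfolding lt_def by auto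

lemma wv_Nil[simp]: "wv g [] = \<one>" by (simp add: wv_def)
lemma wv_Cons[simp]: "wv g (i # w) = lt g i \<otimes> wv g w" by (simp add: wv_def)

lemma wv_carrier: "set g \<subseteq> carrier G \<Longrightarrow> wv g w \<in> carrier G"
  by (induction w) (auto simp: lt_carrier)

lemma wv_append: "set g \<subseteq> carrier G \<Longrightarrow> wv g (xs @ ys) = wv g xs \<otimes> wv g ys"
  by (induction xs) (auto simp: lt_carrier wv_carrier m_assoc)

definition valid :: "'a list \<Rightarrow> rls \<Rightarrow> bool" where
  "valid g R \<longleftrightarrow> (\<forall>lr \<in> set R. wv g (fst lr) = wv g (snd lr))"

lemma app1_sound:
  assumes g: "set g \<subseteq> carrier G" and v: "valid g R"
  shows "wv g (app1 R w pk) = wv g w"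
proof (cases pk)
  case (Pair p k)
  show ?thesis
  proof (cases "k < length R \<and> take (length (fst (R!k))) (drop p w) = fst (R!k)")
    case True
    let ?l = "fst (R!k)" and ?r = "snd (R!k)"
    have e: "w = take p w @ ?l @ drop (p + length ?l) w"
      using True by (metis append_take_drop_id drop_drop add.commute)
    have lr: "wv g ?l = wv g ?r" using v True unfolding valid_def by auto
    have "wv g w = wv g (take p w) \<otimes> (wv g ?l \<otimes> wv g (drop (p + length ?l) w))"
      by (subst e) (simp add: wv_append[OF g])
    also have "\<dots> = wv g (take p w @ ?r @ drop (p + length ?l) w)"
      by (simp add: wv_append[OF g] lr)
    finally show ?thesis using True Pair by simp
  next
    case False then show ?thesis using Pair by auto
  qed
qed

lemma appl_sound:
  assumes g: "set g \<subseteq> carrier G" and v: "valid g R"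
  shows "wv g (appl R w cs) = wv g w"
  unfolding appl_def
  by (induction cs arbitrary: w) (auto simp: app1_sound[OF g v])

lemma wv_rev:
  assumes g: "set g \<subseteq> carrier G" and inv: "\<forall>x \<in> set g. x \<otimes> x = \<one>"
  shows "wv g (rev w) = inv (wv g w)"
proof (induction w)
  case Nil then show ?case by simp
next
  case (Cons i w)
  have li: "inv (lt g i) = lt g i"
    using inv lt_carrier[OF g, of i] unfolding lt_def
    by (auto intro: inv_equality simp: lt_def)
  have "wv g (rev (i # w)) = wv g (rev w) \<otimes> wv g [i]" by (simp add: wv_append[OF g])
  also have "\<dots> = inv (wv g w) \<otimes> lt g i" using Cons by (simp add: lt_carrier[OF g])
  also have "\<dots> = inv (lt g i \<otimes> wv g w)"
    using li by (simp add: inv_mult_group lt_carrier[OF g] wv_carrier[OF g])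
  finally show ?case by simp
qed

lemma piece_in:
  assumes g: "set g \<subseteq> carrier G" and inv: "\<forall>x \<in> set g. x \<otimes> x = \<one>"
  shows "wv g (concat (map (piece T) ps)) \<in> generate G (wv g ` set T)"
proof (induction ps)
  case Nil then show ?case by (simp add: generate.one)
next
  case (Cons jb ps)
  have "wv g (piece T jb) \<in> generate G (wv g ` set T)"
    unfolding piece_def
    by (auto simp: wv_rev[OF g inv] generate.one intro!: generate.incl generate.inv)
  then show ?case using Cons by (simp add: wv_append[OF g] generate.eng)
qed

lemma inW_sound:
  assumes g: "set g \<subseteq> carrier G" and inv: "\<forall>x \<in> set g. x \<otimes> x = \<one>" and v: "valid g R"
    and "inW R T c w"
  shows "wv g w \<in> generate G (wv g ` set T)"
  using assms(4) appl_sound[OF g v, of w "fst c"] piece_in[OF g inv, of T "snd c"]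
  unfolding inW_def by simp


lemma cancel1[simp]: "x \<in> carrier G \<Longrightarrow> y \<in> carrier G \<Longrightarrow> inv x \<otimes> (x \<otimes> y) = y"
  by (simp add: m_assoc[symmetric])
lemma cancel2[simp]: "x \<in> carrier G \<Longrightarrow> y \<in> carrier G \<Longrightarrow> x \<otimes> (inv x \<otimes> y) = y"
  by (simp add: m_assoc[symmetric])

lemma conj_gen:
  assumes T: "T \<subseteq> carrier G" and x: "x \<in> carrier G"
    and N: "subgroup N G" and h: "\<forall>t \<in> T. x \<otimes> t \<otimes> inv x \<in> N"
  shows "\<forall>n \<in> generate G T. x \<otimes> n \<otimes> inv x \<in> N"
proof
  fix n assume "n \<in> generate G T"
  then show "x \<otimes> n \<otimes> inv x \<in> N"
  proof induction
    case one then show ?case using x by (simp add: subgroup.one_closed[OF N])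
  next
    case (incl h) then show ?case using h by auto
  next
    case (inv t)
    have tc: "t \<in> carrier G" using inv T by auto
    have "x \<otimes> inv t \<otimes> inv x = inv (x \<otimes> t \<otimes> inv x)"
      using tc x by (simp add: inv_mult_group m_assoc)
    then show ?case using inv h subgroup.m_inv_closed[OF N] by auto
  next
    case (eng h1 h2)
    have c1: "h1 \<in> carrier G" "h2 \<in> carrier G" using eng generate_in_carrier[OF T] by auto
    have "x \<otimes> (h1 \<otimes> h2) \<otimes> inv x = (x \<otimes> h1 \<otimes> inv x) \<otimes> (x \<otimes> h2 \<otimes> inv x)"
      using c1 x by (simp add: m_assoc)
    then show ?case using eng subgroup.m_closed[OF N] by auto
  qed
qed

lemma conj_gen2:
  assumes S: "S \<subseteq> carrier G" and N: "subgroup N G"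
    and h: "\<forall>s \<in> S. \<forall>n \<in> N. s \<otimes> n \<otimes> inv s \<in> N \<and> inv s \<otimes> n \<otimes> s \<in> N"
  shows "\<forall>g \<in> generate G S. \<forall>n \<in> N. g \<otimes> n \<otimes> inv g \<in> N"
proof
  fix g assume "g \<in> generate G S"
  then show "\<forall>n \<in> N. g \<otimes> n \<otimes> inv g \<in> N"
  proof induction
    case one then show ?case using subgroup.subset[OF N] by auto
  next
    case (incl s) then show ?case using h by auto
  next
    case (inv s) then show ?case using h S by auto
  next
    case (eng h1 h2)
    have c1: "h1 \<in> carrier G" "h2 \<in> carrier G" using eng generate_in_carrier[OF S] by auto
    show ?case
    proof
      fix n assume n: "n \<in> N"
      have nc: "n \<in> carrier G" using n subgroup.subset[OF N] by auto
      have "h1 \<otimes> h2 \<otimes> n \<otimes> inv (h1 \<otimes> h2) = h1 \<otimes> (h2 \<otimes> n \<otimes> inv h2) \<otimes> inv h1"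
        using c1 nc by (simp add: m_assoc inv_mult_group)
      then show "h1 \<otimes> h2 \<otimes> n \<otimes> inv (h1 \<otimes> h2) \<in> N" using eng n by auto
    qed
  qed
qed

lemma derived_into:
  assumes S: "S \<subseteq> carrier G" and N: "subgroup N G"
    and nrm: "\<forall>g \<in> generate G S. \<forall>n \<in> N. g \<otimes> n \<otimes> inv g \<in> N"
    and cm: "\<forall>s \<in> S. \<forall>t \<in> S. s \<otimes> t \<otimes> inv s \<otimes> inv t \<in> N"
  shows "derived G (generate G S) \<subseteq> N"
proof -
  have gc: "generate G S \<subseteq> carrier G" using generate_in_carrier[OF S] by auto
  have A: "\<forall>h \<in> generate G S. s \<otimes> h \<otimes> inv s \<otimes> inv h \<in> N" if s: "s \<in> S" for s
  proof
    have sc: "s \<in> carrier G" using s S by auto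
    fix h assume "h \<in> generate G S"
    then show "s \<otimes> h \<otimes> inv s \<otimes> inv h \<in> N"
    proof induction
      case one then show ?case using sc by (simp add: subgroup.one_closed[OF N])
    next
      case (incl t) then show ?case using cm s by auto
    next
      case (inv t)
      have tc: "t \<in> carrier G" using inv S by auto
      have it: "inv t \<in> generate G S" using inv by (rule generate.inv)
      have c: "s \<otimes> t \<otimes> inv s \<otimes> inv t \<in> N" using cm s inv by auto
      have e: "s \<otimes> inv t \<otimes> inv s \<otimes> inv (inv t) = inv t \<otimes> inv (s \<otimes> t \<otimes> inv s \<otimes> inv t) \<otimes> inv (inv t)"
        using sc tc by (simp add: m_assoc inv_mult_group)
      show ?case using nrm it c subgroup.m_inv_closed[OF N] e by auto
    next
      case (eng h1 h2)
      have c1: "h1 \<in> carrier G" "h2 \<in> carrier G" using eng gc by auto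
      have e: "s \<otimes> (h1 \<otimes> h2) \<otimes> inv s \<otimes> inv (h1 \<otimes> h2)
          = (s \<otimes> h1 \<otimes> inv s \<otimes> inv h1) \<otimes> (h1 \<otimes> (s \<otimes> h2 \<otimes> inv s \<otimes> inv h2) \<otimes> inv h1)"
        using c1 sc by (simp add: m_assoc inv_mult_group)
      show ?case using e eng nrm subgroup.m_closed[OF N] by auto
    qed
  qed
  have B: "\<forall>k \<in> generate G S. h \<otimes> k \<otimes> inv h \<otimes> inv k \<in> N" if "h \<in> generate G S" for h
    using that
  proof induction
    case one then show ?case using gc by (auto simp: subgroup.one_closed[OF N])
  next
    case (incl s) then show ?case using A by auto
  next
    case (inv s)
    have sc: "s \<in> carrier G" using inv S by auto
    show ?case
    proof
      fix k assume k: "k \<in> generate G S"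
      have kc: "k \<in> carrier G" using k gc by auto
      have is': "inv s \<in> generate G S" using inv by (rule generate.inv)
      have e: "inv s \<otimes> k \<otimes> inv (inv s) \<otimes> inv k = inv s \<otimes> inv (s \<otimes> k \<otimes> inv s \<otimes> inv k) \<otimes> inv (inv s)"
        using sc kc by (simp add: m_assoc inv_mult_group)
      show "inv s \<otimes> k \<otimes> inv (inv s) \<otimes> inv k \<in> N"
        using e A[OF inv] k nrm is' subgroup.m_inv_closed[OF N] by auto
    qed
  next
    case (eng h1 h2)
    have c1: "h1 \<in> carrier G" "h2 \<in> carrier G" using eng gc by auto
    show ?case
    proof
      fix k assume k: "k \<in> generate G S"
      have kc: "k \<in> carrier G" using k gc by auto
      have e: "h1 \<otimes> h2 \<otimes> k \<otimes> inv (h1 \<otimes> h2) \<otimes> inv k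
          = (h1 \<otimes> (h2 \<otimes> k \<otimes> inv h2 \<otimes> inv k) \<otimes> inv h1) \<otimes> (h1 \<otimes> k \<otimes> inv h1 \<otimes> inv k)"
        using c1 kc by (simp add: m_assoc inv_mult_group)
      show "h1 \<otimes> h2 \<otimes> k \<otimes> inv (h1 \<otimes> h2) \<otimes> inv k \<in> N"
        using e eng k nrm subgroup.m_closed[OF N] by auto
    qed
  qed
  have "derived_set G (generate G S) \<subseteq> N" using B by auto
  then show ?thesis unfolding derived_def using generate_subgroup_incl[OF _ N] by auto
qed


lemma wv_in_gen:
  assumes g: "set g \<subseteq> carrier G" and "\<forall>i \<in> set s. i < length g"
  shows "wv g s \<in> generate G (set g)"
  using assms(2)
proof (induction s)
  case Nil then show ?case by (simp add: generate.one)
next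
  case (Cons i s)
  have "lt g i \<in> generate G (set g)" using Cons.prems unfolding lt_def by (auto intro: generate.incl)
  then show ?case using Cons by (auto intro: generate.eng)
qed

lemma level:
  assumes g: "set g \<subseteq> carrier G" and inv: "\<forall>x\<in>set g. x \<otimes> x = \<one>" and len: "length g = 3"
    and v: "valid g R" and ok: "lvl_ok R S T C"
  shows "derived G (generate G (wv g ` set S)) \<subseteq> generate G (wv g ` set T)"
proof -
  let ?N = "generate G (wv g ` set T)"
  have wT: "wv g ` set T \<subseteq> carrier G" using wv_carrier[OF g] by auto
  have N: "subgroup ?N G" by (rule generate_is_subgroup[OF wT])
  have invx: "inv x = x" if "x \<in> set g" for x
    using inv that g by (auto intro: inv_equality)
  have cx: "\<forall>n \<in> ?N. x \<otimes> n \<otimes> inv x \<in> ?N \<and> inv x \<otimes> n \<otimes> x \<in> ?N" if x: "x \<in> set g" for x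
  proof -
    obtain u where u: "u < 3" "x = g ! u" using x len by (metis in_set_conv_nth)
    have xc: "x \<in> carrier G" using x g by auto
    have "\<forall>t \<in> wv g ` set T. x \<otimes> t \<otimes> inv x \<in> ?N"
    proof
      fix t assume "t \<in> wv g ` set T"
      then obtain t' where t': "t' \<in> set T" "t = wv g t'" by auto
      have "u \<in> set [0,1,2]" using u by auto
      then obtain c where "inW R T c ([u] @ t' @ [u])" using ok t' unfolding lvl_ok_def by blast
      then have "wv g ([u] @ t' @ [u]) \<in> ?N" by (rule inW_sound[OF g inv v])
      moreover have "wv g ([u] @ t' @ [u]) = x \<otimes> t \<otimes> inv x"
        using u len t' xc invx[OF x] by (simp add: lt_def wv_carrier[OF g] wv_append[OF g] m_assoc)
      ultimately show "x \<otimes> t \<otimes> inv x \<in> ?N" by simp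
    qed
    then have "\<forall>n \<in> ?N. x \<otimes> n \<otimes> inv x \<in> ?N" by (rule conj_gen[OF wT xc N])
    then show ?thesis using invx[OF x] by simp
  qed
  have nrmH: "\<forall>h \<in> generate G (set g). \<forall>n \<in> ?N. h \<otimes> n \<otimes> inv h \<in> ?N"
    by (rule conj_gen2[OF g N]) (use cx in blast)
  have Sg: "wv g ` set S \<subseteq> generate G (set g)"
    using ok wv_in_gen[OF g] len unfolding lvl_ok_def by auto
  have sub: "generate G (wv g ` set S) \<subseteq> generate G (set g)"
    by (rule generate_subgroup_incl[OF Sg generate_is_subgroup[OF g]])
  have wS: "wv g ` set S \<subseteq> carrier G" using wv_carrier[OF g] by auto
  show ?thesis
  proof (rule derived_into[OF wS N])
    show "\<forall>h \<in> generate G (wv g ` set S). \<forall>n \<in> ?N. h \<otimes> n \<otimes> inv h \<in> ?N"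
      using nrmH sub by blast
    show "\<forall>s\<in>wv g ` set S. \<forall>t\<in>wv g ` set S. s \<otimes> t \<otimes> inv s \<otimes> inv t \<in> ?N"
    proof (intro ballI)
      fix s t assume "s \<in> wv g ` set S" "t \<in> wv g ` set S"
      then obtain s' t' where st: "s' \<in> set S" "t' \<in> set S" "s = wv g s'" "t = wv g t'" by auto
      then obtain c where "inW R T c (s' @ t' @ rev s' @ rev t')" using ok unfolding lvl_ok_def by blast
      then have "wv g (s' @ t' @ rev s' @ rev t') \<in> ?N" by (rule inW_sound[OF g inv v])
      moreover have "wv g (s' @ t' @ rev s' @ rev t') = s \<otimes> t \<otimes> inv s \<otimes> inv t"
        using st by (simp add: wv_append[OF g] wv_rev[OF g inv] wv_carrier[OF g] m_assoc)
      ultimately show "s \<otimes> t \<otimes> inv s \<otimes> inv t \<in> ?N" by simp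
    qed
  qed
qed

lemma chain:
  assumes abc: "a \<in> carrier G" "b \<in> carrier G" "c \<in> carrier G"
    and inv: "a \<otimes> a = \<one>" "b \<otimes> b = \<one>" "c \<otimes> c = \<one>"
    and v: "valid [a,b,c] R" and ok: "all_ok R T C"
  shows "(derived G ^^ 3) (generate G {a,b,c}) = {\<one>}"
proof -
  let ?g = "[a,b,c]"
  have g: "set ?g \<subseteq> carrier G" using abc by auto
  have i: "\<forall>x\<in>set ?g. x \<otimes> x = \<one>" using inv by auto
  have l: "length ?g = 3" by simp
  have H: "wv ?g ` set [[0],[1],[2]] = {a,b,c}" using abc by (auto simp: lt_def)
  note ok' = ok[unfolded all_ok_def]
  have L1': "derived G (generate G (wv ?g ` set [[0],[1],[2]])) \<subseteq> generate G (wv ?g ` set [[0,1],[0,2]])"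
    by (rule level[OF g i l v]) (use ok' in blast)
  have L1: "derived G (generate G {a,b,c}) \<subseteq> generate G (wv ?g ` set [[0,1],[0,2]])"
    using L1'[unfolded H] .
  have L2: "derived G (generate G (wv ?g ` set [[0,1],[0,2]])) \<subseteq> generate G (wv ?g ` set T)"
    by (rule level[OF g i l v]) (use ok' in blast)
  have L3: "derived G (generate G (wv ?g ` set T)) \<subseteq> {\<one>}"
    using level[OF g i l v, of T "[]" C] ok' generate_empty by simp
  have "(derived G ^^ 3) (generate G {a,b,c}) = derived G (derived G (derived G (generate G {a,b,c})))"
    by (simp add: numeral_3_eq_3)
  also have "\<dots> \<subseteq> {\<one>}"
    using L3 mono_derived[OF mono_derived[OF L1]] L2 mono_derived[OF L2] by blast
  finally have "(derived G ^^ 3) (generate G {a,b,c}) \<subseteq> {\<one>}" .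
  moreover have "\<one> \<in> (derived G ^^ 3) (generate G {a,b,c})"
    using subgroup.one_closed[OF exp_of_derived_is_subgroup[OF generate_is_subgroup]] abc by auto
  ultimately show ?thesis by auto
qed

lemma valid_rules:
  assumes abc: "a \<in> carrier G" "b \<in> carrier G" "c \<in> carrier G"
    and inv: "a \<otimes> a = \<one>" "b \<otimes> b = \<one>" "c \<otimes> c = \<one>"
    and r01: "if b01 then a \<otimes> b \<otimes> a = b \<otimes> a \<otimes> b else a \<otimes> b = b \<otimes> a"
    and r02: "if b02 then a \<otimes> c \<otimes> a = c \<otimes> a \<otimes> c else a \<otimes> c = c \<otimes> a"
    and r12: "if b12 then b \<otimes> c \<otimes> b = c \<otimes> b \<otimes> c else b \<otimes> c = c \<otimes> b"
  shows "valid [a,b,c] (rules b01 b02 b12)"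
  using r01 r02 r12 abc inv
  unfolding valid_def rules_def prs_def
  by (cases b01; cases b02; cases b12) (auto simp: lt_def m_assoc)

end

lemma ok_FFF: "all_ok (rules False False False)
  []
  [([(0, 0), (0, 7)], [(0, False)]), ([(0, 0), (0, 9)], [(1, False)]), ([(2, 1), (0, 7)], [(0, False)]), ([(0, 7), (1, 10), (2, 1)], [(1, False)]), ([(0, 9), (2, 10), (1, 2)], [(0, False)]), ([(2, 2), (0, 9)], [(1, False)]), ([(0, 0), (0, 0)], []), ([(0, 6), (1, 0), (0, 1)], []), ([(0, 8), (1, 0), (0, 2)], []), ([(1, 6), (0, 1), (0, 0)], []), ([(0, 1), (0, 1)], []), ([(0, 10), (1, 1), (0, 2)], []), ([(1, 8), (0, 2), (0, 0)], []), ([(1, 10), (0, 2), (0, 1)], []), ([(0, 2), (0, 2)], []), ([(3, 1), (2, 0), (1, 1), (0, 0)], []), ([(0, 6), (1, 0), (3, 8), (4, 0), (0, 10), (1, 1), (0, 2)], []), ([(5, 6), (6, 0), (0, 8), (1, 0), (1, 10), (0, 2), (0, 1)], []), ([(3, 2), (2, 0), (1, 2), (0, 0)], [])]"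
  by code_simp

lemma ok_FFT: "all_ok (rules False False True)
  [[2, 1]]
  [([(0, 0), (0, 7)], [(0, False)]), ([(0, 0), (0, 9)], [(1, False)]), ([(2, 1), (0, 7)], [(0, False)]), ([(1, 8), (1, 3), (0, 7)], [(0, False), (1, False), (0, False)]), ([(1, 6), (2, 8), (0, 11), (2, 7), (1, 3), (0, 7)], [(0, False), (1, False), (0, False)]), ([(2, 2), (0, 9)], [(1, False)]), ([(0, 0), (0, 0)], []), ([(0, 6), (1, 0), (0, 1)], []), ([(0, 8), (1, 0), (0, 2)], []), ([(1, 6), (0, 1), (0, 0)], []), ([(0, 1), (0, 1)], []), ([(0, 10), (2, 2), (1, 3), (0, 9)], [(1, False), (0, False)]), ([(1, 8), (0, 2), (0, 0)], []), ([(1, 10), (0, 2), (1, 3), (0, 7)], [(0, False), (1, False)]), ([(0, 2), (0, 2)], []), ([(2, 7), (0, 8), (1, 0)], [(0, False)]), ([(2, 1)], [(0, True)]), ([(0, 2)], [(0, True)]), ([(3, 1), (2, 0), (1, 1), (0, 0)], []), ([(0, 6), (1, 0), (3, 8), (4, 0), (0, 10), (2, 2)], [(0, False)]), ([(5, 6), (6, 0), (0, 8), (1, 0), (1, 10), (0, 2)], [(0, True)]), ([(3, 2), (2, 0), (1, 2), (0, 0)], []), ([(3, 1), (2, 2), (1, 1), (0, 2)], [])]"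
  by code_simp

lemma ok_FTF: "all_ok (rules False True False)
  [[0, 2]]
  [([(0, 0), (0, 7)], [(0, False)]), ([(0, 0)], [(1, True)]), ([(2, 1), (0, 7)], [(0, False)]), ([(0, 7), (1, 10), (2, 1)], [(1, False)]), ([(1, 6), (0, 11), (1, 9), (0, 7)], [(0, False), (1, True)]), ([(2, 2)], [(1, True)]), ([(0, 0), (0, 0)], []), ([(0, 6), (1, 0), (0, 1)], []), ([(0, 8), (2, 2)], [(1, True)]), ([(1, 6), (0, 1), (0, 0)], []), ([(0, 1), (0, 1)], []), ([(0, 10), (1, 1), (0, 2)], []), ([(1, 8), (0, 2)], [(1, False)]), ([(1, 10), (0, 2), (0, 1)], []), ([(0, 2), (0, 2)], []), ([(0, 0)], [(0, True)]), ([(0, 7), (1, 10), (2, 1)], [(0, False)]), ([(2, 2)], [(0, True)]), ([(3, 1), (2, 0), (1, 1), (0, 0)], []), ([(0, 6), (1, 0), (0, 10), (1, 1), (1, 8), (0, 2)], [(0, False)]), ([(5, 6), (6, 0), (3, 10), (4, 1), (0, 8), (2, 2)], [(0, True)]), ([(3, 2), (2, 0), (1, 2), (0, 0)], []), ([(3, 2), (2, 0), (1, 2), (0, 0)], [])]"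
  by code_simp

lemma ok_FTT: "all_ok (rules False True True)
  [[2, 1, 0, 2], [0, 2, 1, 0, 2, 0]]
  [([(0, 0), (0, 7)], [(0, False)]), ([(0, 0)], [(1, True)]), ([(2, 1), (0, 7)], [(0, False)]), ([(0, 7), (3, 3)], [(0, False), (1, True), (0, False)]), ([(1, 6), (1, 3)], [(1, True), (0, False), (1, False)]), ([(2, 2)], [(1, True)]), ([(0, 0), (0, 0)], []), ([(0, 6), (1, 0), (0, 1)], []), ([(0, 8), (2, 2)], [(1, True)]), ([(1, 6), (0, 1), (0, 0)], []), ([(0, 1), (0, 1)], []), ([(0, 10), (2, 2), (1, 3)], [(1, True), (0, False)]), ([(1, 8), (0, 2)], [(1, False)]), ([(1, 10), (0, 2), (1, 3), (0, 7)], [(0, False), (1, False)]), ([(0, 2), (0, 2)], []), ([], [(1, False)]), ([(0, 0), (4, 0)], [(0, False)]), ([(2, 7), (3, 10), (1, 9), (3, 6), (0, 7), (1, 10), (3, 9)], [(1, False)]), ([(0, 7), (4, 8), (1, 10), (3, 2), (2, 7), (0, 8), (3, 10), (2, 2), (1, 6)], [(0, False)]), ([(0, 2), (2, 2), (1, 5), (0, 5), (1, 11), (4, 3), (3, 7), (4, 5), (2, 9)], [(0, False), (1, False)]), ([(4, 8), (6, 2), (0, 9), (2, 6)], [(1, False)]), ([(3, 1), (2, 0), (1, 1), (0, 0)], []), ([(0, 6), (1, 0), (3, 8), (0, 10), (2, 2)], [(0, False)]), ([(5, 6), (6, 0), (0, 8), (3, 10), (2, 2), (1, 6)], [(0, False)]),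 ([(3, 2), (2, 0), (1, 2), (0, 0)], []), ([(3, 2), (5, 2), (4, 0), (3, 1), (3, 2), (2, 0), (1, 1), (0, 2)], []), ([(2, 8), (4, 2), (3, 6), (4, 0), (5, 8), (4, 2), (8, 8), (7, 2), (1, 10), (0, 2), (4, 7), (2, 8), (1, 2), (3, 10), (2, 2), (3, 2), (1, 6), (0, 1), (0, 0)], []), ([(3, 8), (5, 2), (4, 6), (5, 0), (6, 8), (5, 2), (9, 8), (8, 2), (2, 10), (1, 2), (0, 6), (1, 8), (3, 2), (2, 6), (3, 0), (0, 10), (2, 2), (1, 1), (0, 2)], []), ([(5, 0), (4, 2), (7, 0), (6, 2), (5, 0), (4, 1), (5, 0), (4, 2), (3, 0), (2, 1), (1, 2), (0, 0)], [])]"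
  by code_simp

lemma ok_TFF: "all_ok (rules True False False)
  [[1, 0]]
  [([(0, 0)], [(0, True)]), ([(0, 0), (0, 9)], [(1, False)]), ([(2, 1)], [(0, True)]), ([(2, 11), (0, 7)], [(0, False), (1, False)]), ([(0, 9), (2, 10), (1, 2)], [(0, False)]), ([(2, 2), (0, 9)], [(1, False)]), ([(0, 0), (0, 0)], []), ([(0, 6), (2, 1)], [(0, True)]), ([(0, 8), (1, 0), (0, 2)], []), ([(1, 6), (0, 1)], [(0, False)]), ([(0, 1), (0, 1)], []), ([(0, 10), (1, 1), (0, 2)], []), ([(1, 8), (0, 2), (0, 0)], []), ([(1, 10), (0, 2), (0, 1)], []), ([(0, 2), (0, 2)], []), ([(2, 0)], [(0, True)]), ([(0, 1)], [(0, True)]), ([(2, 8), (1, 10), (0, 2)], [(0, False)]), ([(3, 1), (2, 0), (1, 1), (0, 0)], []), ([(5, 8), (6, 0), (4, 10), (3, 2), (0, 6), (2, 1)], [(0, False)]), ([(0, 8), (1, 0), (1, 10), (0, 2), (1, 6), (0, 1)], [(0, True)]), ([(3, 2), (2, 0), (1, 2), (0, 0)], []), ([(3, 0), (2, 1), (1, 0), (0, 1)], [])]"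
  by code_simp

lemma ok_TFT: "all_ok (rules True False True)
  [[1, 0, 2, 1], [0, 1, 0, 2, 1, 0]]
  [([(0, 0)], [(0, True)]), ([(0, 0), (0, 9)], [(1, False)]), ([(2, 1)], [(0, True)]), ([(1, 8), (1, 3)], [(0, True), (1, False), (0, False)]), ([(0, 9), (1, 11), (3, 3), (2, 9)], [(0, False), (1, False), (0, False)]), ([(2, 2), (0, 9)], [(1, False)]), ([(0, 0), (0, 0)], []), ([(0, 6), (2, 1)], [(0, True)]), ([(0, 8), (1, 0), (0, 2)], []), ([(1, 6), (0, 1)], [(0, False)]), ([(0, 1), (0, 1)], []), ([(0, 10), (2, 2), (1, 3), (0, 9)], [(1, False), (0, False)]), ([(1, 8), (0, 2), (0, 0)], []), ([(1, 10), (0, 2), (1, 3)], [(0, True), (1, False)]), ([(0, 2), (0, 2)], []), ([], [(1, False)]), ([(0, 0), (4, 0)], [(0, False)]), ([(0, 1), (2, 1), (0, 8), (1, 4), (2, 5), (0, 11), (2, 3), (1, 9), (3, 4), (4, 7)], [(0, False), (1, False)]), ([(1, 6), (0, 1), (3, 7), (2, 9)], [(1, False)]), ([(2, 8), (0, 11), (2, 7), (4, 8), (1, 9), (2, 11), (0, 7)], [(1, False)]), ([(1, 6), (6, 8), (3, 10), (5, 2), (2, 8), (3, 6), (1, 10), (0, 2), (1, 9)], [(0, False)]), ([(3, 1), (2, 0), (1, 1), (0, 0)], []), ([(5, 8), (6, 0), (0, 6), (2, 10), (4, 2)], [(0, False)]), ([(0, 8), (1, 0), (3, 6), (1, 10),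 (0, 2), (1, 9)], [(0, False)]), ([(3, 2), (2, 0), (1, 2), (0, 0)], []), ([(3, 1), (5, 1), (4, 2), (3, 0), (3, 1), (2, 2), (1, 0), (0, 1)], []), ([(4, 6), (3, 1), (10, 6), (12, 1), (1, 8), (2, 0), (9, 8), (10, 0), (0, 10), (2, 2), (1, 1), (2, 10), (4, 2), (3, 1), (1, 8), (0, 2), (0, 0)], []), ([(5, 6), (4, 1), (11, 6), (13, 1), (2, 8), (3, 0), (10, 8), (11, 0), (1, 10), (3, 2), (2, 1), (0, 8), (1, 0), (1, 10), (0, 2), (1, 2), (0, 1)], []), ([(5, 0), (4, 1), (7, 0), (6, 1), (5, 2), (4, 0), (5, 0), (4, 1), (3, 2), (2, 0), (1, 1), (0, 0)], [])]"
  by code_simp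

lemma ok_TTF: "all_ok (rules True True False)
  [[1, 2], [0, 1, 2, 0]]
  [([(0, 0)], [(0, True)]), ([(0, 0)], [(1, True)]), ([(2, 1)], [(0, True)]), ([(2, 11), (0, 7)], [(0, False), (1, False)]), ([(2, 10), (0, 9)], [(1, False), (0, False)]), ([(2, 2)], [(1, True)]), ([(0, 0), (0, 0)], []), ([(0, 6), (2, 1)], [(0, True)]), ([(0, 8), (2, 2)], [(1, True)]), ([(1, 6), (0, 1)], [(0, False)]), ([(0, 1), (0, 1)], []), ([(0, 10), (1, 1), (0, 2)], []), ([(1, 8), (0, 2)], [(1, False)]), ([(1, 10), (0, 2), (0, 1)], []), ([(0, 2), (0, 2)], []), ([], [(1, False)]), ([(0, 0), (2, 0)], [(0, False)]), ([(0, 1), (0, 11)], [(0, False)]), ([(2, 10), (3, 7), (1, 8), (3, 11)], [(0, False), (1, False)]), ([(2, 2), (0, 11)], [(0, False)]), ([(3, 9), (1, 6), (0, 11)], [(0, False), (1, False)]), ([(3, 1), (2, 0), (1, 1), (0, 0)], []), ([(0, 6), (2, 10), (3, 1), (1, 8), (3, 2), (2, 0)], [(0, False)]), ([(5, 6), (3, 10), (4, 1), (0, 8), (2, 2), (1, 0), (0, 11)], [(0, False)]), ([(3, 2), (2, 0), (1, 2), (0, 0)], []), ([(3, 2), (2, 1), (1, 2), (0, 1)], []), ([(4, 9), (2, 6), (0, 10), (1, 1), (4, 6), (2, 10), (3, 1), (1, 8), (0, 2), (2, 10), (1, 2), (1, 1), (0, 0)], []), ([(5, 9), (3, 6), (1,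 10), (2, 1), (5, 6), (3, 10), (4, 1), (0, 8), (2, 2), (1, 0), (1, 10), (0, 2), (0, 1)], []), ([(3, 0), (5, 0), (4, 2), (3, 1), (3, 0), (2, 2), (1, 1), (0, 0)], [])]"
  by code_simp

lemma ok_TTT: "all_ok (rules True True True)
  [[1, 0, 2, 1, 0, 2], [0, 2, 1, 0, 2, 1]]
  [([(0, 0)], [(0, True)]), ([(0, 0)], [(1, True)]), ([(2, 1)], [(0, True)]), ([(3, 3)], [(0, True), (1, True), (0, False)]), ([(3, 3)], [(1, True), (0, True), (1, False)]), ([(2, 2)], [(1, True)]), ([(0, 0), (0, 0)], []), ([(0, 6), (2, 1)], [(0, True)]), ([(0, 8), (2, 2)], [(1, True)]), ([(1, 6), (0, 1)], [(0, False)]), ([(0, 1), (0, 1)], []), ([(0, 10), (2, 2), (1, 3)], [(1, True), (0, False)]), ([(1, 8), (0, 2)], [(1, False)]), ([(1, 10), (0, 2), (1, 3)], [(0, True), (1, False)]), ([(0, 2), (0, 2)], []), ([(0, 6), (5, 8), (2, 10), (4, 2)], [(0, False)]), ([(0, 0), (5, 5), (3, 11), (1, 7), (3, 5), (4, 9), (5, 4)], [(0, True), (1, True)]), ([(0, 1)], [(1, False)]), ([(6, 1)], [(0, False)]), ([(6, 2), (5, 5), (3, 11), (1, 7), (3, 5), (4, 9), (5, 4)], [(0, True), (1, True)]), ([(0, 9), (2, 6), (4, 10), (6, 2)], [(1, False)]), ([(3, 1), (2, 0), (1, 1), (0, 0)], []), ([(0, 6), (5, 8), (2, 10), (4, 2)],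 [(0, False)]), ([(5, 6), (0, 8), (3, 10), (2, 2)], [(0, True)]), ([(3, 2), (2, 0), (1, 2), (0, 0)], []), ([(11, 2), (10, 0), (9, 1), (8, 2), (7, 0), (6, 1), (5, 2), (4, 0), (3, 1), (2, 2), (1, 0), (0, 1)], []), ([(17, 1), (4, 8), (6, 2), (14, 8), (13, 2), (5, 6), (3, 10), (2, 2), (5, 10), (7, 2), (7, 6), (6, 1), (4, 8), (3, 2), (1, 6), (0, 1), (1, 10), (3, 2), (2, 1), (1, 2), (0, 0)], []), ([(5, 1), (3, 8), (5, 2), (13, 8), (12, 2), (4, 6), (2, 10), (1, 2), (4, 10), (6, 2), (6, 6), (5, 1), (3, 8), (2, 2), (4, 10), (3, 2), (4, 2), (0, 6), (2, 1), (1, 0), (0, 1)], []), ([(11, 1), (10, 2), (9, 0), (8, 1), (7, 2), (6, 0), (5, 1), (4, 2), (3, 0), (2, 1), (1, 2), (0, 0)], [])]"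
  by code_simp

lemma ok_all: "\<exists>T C. all_ok (rules b01 b02 b12) T C"
  using ok_FFF ok_FFT ok_FTF ok_FTT ok_TFF ok_TFT ok_TTF ok_TTT by (cases b01; cases b02; cases b12) auto

lemma (in group) rel_cases:
  assumes "x \<in> carrier G" "y \<in> carrier G" "x \<otimes> x = \<one>" "y \<otimes> y = \<one>"
    and "ord (x \<otimes> y) \<in> {1,2,3}"
  shows "\<exists>b. if b then x \<otimes> y \<otimes> x = y \<otimes> x \<otimes> y else x \<otimes> y = y \<otimes> x"
proof -
  have ix: "inv x = x" and iy: "inv y = y" using assms by (auto intro: inv_equality)
  have p: "(x \<otimes> y) [^] ord (x \<otimes> y) = \<one>" using assms by simp
  from assms(5) consider "ord (x \<otimes> y) = 1" | "ord (x \<otimes> y) = 2" | "ord (x \<otimes> y) = 3" by auto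
  then show ?thesis
  proof cases
    case 1
    then have "x \<otimes> y = \<one>" using p assms by simp
    then have "y = x" using assms ix by (metis inv_equality)
    then show ?thesis by (metis (full_types))
  next
    case 2
    then have "(x \<otimes> y) \<otimes> (x \<otimes> y) = \<one>" using p assms by (simp add: numeral_2_eq_2)
    then have "inv (x \<otimes> y) = x \<otimes> y" using assms by (auto intro: inv_equality)
    then have "x \<otimes> y = y \<otimes> x" using assms ix iy by (simp add: inv_mult_group)
    then show ?thesis by (metis (full_types))
  next
    case 3
    then have "(x \<otimes> y) \<otimes> ((x \<otimes> y) \<otimes> (x \<otimes> y)) = \<one>" using p assms by (simp add: numeral_3_eq_3 m_assoc)
    then have "(y \<otimes> x \<otimes> y) \<otimes> (x \<otimes> y \<otimes> x) = \<one>"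
      using assms by (metis m_assoc m_closed inv_equality inv_inv r_inv)
    then have "inv (x \<otimes> y \<otimes> x) = y \<otimes> x \<otimes> y" using assms by (auto intro: inv_equality)
    then have "x \<otimes> y \<otimes> x = y \<otimes> x \<otimes> y" using assms ix iy by (simp add: inv_mult_group m_assoc)
    then show ?thesis by (metis (full_types))
  qed
qed

lemma (in group) three_gen:
  assumes abc: "a \<in> carrier G" "b \<in> carrier G" "c \<in> carrier G"
    and inv: "a \<otimes> a = \<one>" "b \<otimes> b = \<one>" "c \<otimes> c = \<one>"
    and o: "ord (a \<otimes> b) \<in> {1,2,3}" "ord (a \<otimes> c) \<in> {1,2,3}" "ord (b \<otimes> c) \<in> {1,2,3}"
  shows "(derived G ^^ 3) (generate G {a,b,c}) = {\<one>}"
proof -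
  obtain b01 where r01: "if b01 then a \<otimes> b \<otimes> a = b \<otimes> a \<otimes> b else a \<otimes> b = b \<otimes> a"
    using rel_cases[OF abc(1,2) inv(1,2) o(1)] by blast
  obtain b02 where r02: "if b02 then a \<otimes> c \<otimes> a = c \<otimes> a \<otimes> c else a \<otimes> c = c \<otimes> a"
    using rel_cases[OF abc(1,3) inv(1,3) o(2)] by blast
  obtain b12 where r12: "if b12 then b \<otimes> c \<otimes> b = c \<otimes> b \<otimes> c else b \<otimes> c = c \<otimes> b"
    using rel_cases[OF abc(2,3) inv(2,3) o(3)] by blast
  obtain T C where "all_ok (rules b01 b02 b12) T C" using ok_all by blast
  then show ?thesis
    using chain[OF abc inv valid_rules[OF abc inv r01 r02 r12]] by blast
qed

lemma (in group) derived_sub_consistent: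
  assumes "subgroup K G"
  shows "(derived (G\<lparr>carrier := K\<rparr>) ^^ n) K = (derived G ^^ n) K \<and> (derived G ^^ n) K \<subseteq> K"
proof (induction n)
  case 0 then show ?case by simp
next
  case (Suc n)
  then show ?case
    using derived_consistent[OF _ assms] derived_incl[OF _ assms] by simp
qed

lemma (in group) solvable_from_derived:
  assumes K: "subgroup K G" and d: "(derived G ^^ n) K = {\<one>}"
  shows "solvable (G\<lparr>carrier := K\<rparr>)"
proof -
  interpret K: group "G\<lparr>carrier := K\<rparr>" by (rule subgroup_imp_group[OF K])
  have "(derived (G\<lparr>carrier := K\<rparr>) ^^ n) (carrier (G\<lparr>carrier := K\<rparr>)) = {\<one>\<^bsub>G\<lparr>carrier := K\<rparr>\<^esub>}"
    using derived_sub_consistent[OF K, of n] d by simp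
  then show ?thesis using K.solvable_iff_trivial_derived_seq by blast
qed

lemma (in group) main_aux:
  assumes "three_transp_class G D" and d: "d \<in> D" and a1: "a1 \<in> carrier G" and a2: "a2 \<in> carrier G"
  shows "solvable (G\<lparr>carrier := generate G {commutator G a1 d, commutator G a2 d}\<rparr>)"
proof -
  obtain d0 where d0: "d0 \<in> carrier G" and Deq: "D = {g \<otimes> d0 \<otimes> inv g | g. g \<in> carrier G}"
    using assms(1) unfolding three_transp_class_def by blast
  have ord2: "\<And>x. x \<in> D \<Longrightarrow> ord x = 2" and ordp: "\<And>x y. x \<in> D \<Longrightarrow> y \<in> D \<Longrightarrow> ord (x \<otimes> y) \<in> {1,2,3}"
    using assms(1) unfolding three_transp_class_def by blast+
  have Dc: "\<And>x. x \<in> D \<Longrightarrow> x \<in> carrier G" using Deq d0 by auto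
  have Dconj: "\<And>g x. g \<in> carrier G \<Longrightarrow> x \<in> D \<Longrightarrow> g \<otimes> x \<otimes> inv g \<in> D"
  proof -
    fix g x assume g: "g \<in> carrier G" and x: "x \<in> D"
    then obtain h where h: "h \<in> carrier G" "x = h \<otimes> d0 \<otimes> inv h" using Deq by auto
    have "g \<otimes> x \<otimes> inv g = (g \<otimes> h) \<otimes> d0 \<otimes> inv (g \<otimes> h)"
      using g h d0 by (simp add: m_assoc inv_mult_group)
    then show "g \<otimes> x \<otimes> inv g \<in> D" using Deq g h by auto
  qed
  have Dinv: "\<And>x. x \<in> D \<Longrightarrow> x \<otimes> x = \<one>"
  proof -
    fix x assume x: "x \<in> D"
    have "x [^] ord x = \<one>" using Dc[OF x] by simp
    then show "x \<otimes> x = \<one>" using ord2[OF x] Dc[OF x] by (simp add: numeral_2_eq_2)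
  qed
  define e1 where "e1 = a1 \<otimes> d \<otimes> inv a1"
  define e2 where "e2 = a2 \<otimes> d \<otimes> inv a2"
  have e1: "e1 \<in> D" and e2: "e2 \<in> D" unfolding e1_def e2_def using Dconj a1 a2 d by auto
  have invd: "inv d = d" using Dinv[OF d] Dc[OF d] by (auto intro: inv_equality)
  have c1: "commutator G a1 d = e1 \<otimes> d" and c2: "commutator G a2 d = e2 \<otimes> d"
    unfolding commutator_def e1_def e2_def using invd by simp_all
  have H: "(derived G ^^ 3) (generate G {d, e1, e2}) = {\<one>}"
    by (rule three_gen) (use Dc Dinv ordp d e1 e2 in auto)
  have Hs: "subgroup (generate G {d, e1, e2}) G"
    by (rule generate_is_subgroup) (use Dc d e1 e2 in auto)
  have sub: "generate G {e1 \<otimes> d, e2 \<otimes> d} \<subseteq> generate G {d, e1, e2}"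
    by (rule generate_subgroup_incl[OF _ Hs]) (auto intro: generate.incl generate.eng)
  have Ks: "subgroup (generate G {e1 \<otimes> d, e2 \<otimes> d}) G"
    by (rule generate_is_subgroup) (use Dc d e1 e2 in auto)
  have "(derived G ^^ 3) (generate G {e1 \<otimes> d, e2 \<otimes> d}) = {\<one>}"
    using mono_exp_of_derived[OF sub, of 3] H
      subgroup.one_closed[OF exp_of_derived_is_subgroup[OF Ks, of 3]] by auto
  then show ?thesis
    unfolding c1 c2 by (rule solvable_from_derived[OF Ks])
qed


theorem proposition8p2:
  fixes G :: "('a, 'b) monoid_scheme" and D :: "'a set"
  assumes "group G" and "finite (carrier G)" and "three_transp_class G D"
  shows "\<forall>d \<in> D. \<forall>a1 \<in> carrier G. \<forall>a2 \<in> carrier G.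
           solvable (G\<lparr>carrier := generate G {commutator G a1 d, commutator G a2 d}\<rparr>)"
  using group.main_aux[OF assms(1) assms(3)] by blast

end
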